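(* Let $s\ge 1$, $r\ge 1$, let $n_1,\ldots,n_r\ge 1$ be integers, and let $\sigma_1,\ldots,\sigma_r$ be semi-characters each of which is a finite product (possibly empty, giving the trivial semi-character $\boldsymbol{1}$) of the maps $\chi_{t_1},\ldots,\chi_{t_s}$. Then the multiple zeta value $$\zeta_C\begin{pmatrix}\sigma_1&\cdots&\sigma_r\\ n_1&\cdots&n_r\end{pmatrix}$$ belongs to the Tate algebra $\mathbb{T}_s$, and the function it defines on $\{(z_1,\ldots,z_s)\in\mathbb{C}_\infty^s:|z_i|\le 1\}$ extends to an entire function $\mathbb{C}_\infty^s\to\mathbb{C}_\infty$ (i.e. it is given by a power series in $t_1,\ldots,t_s$ with coefficients in $\mathbb{C}_\infty$ converging on all of $\mathbb{C}_\infty^s$).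
   Context: $q$ is a power of a prime $p$, $A=\mathbb{F}_q[\theta]$, $K=\mathbb{F}_q(\theta)$, $K_\infty=\mathbb{F}_q((1/\theta))$, $\mathbb{C}_\infty$ the completion of an algebraic closure of $K_\infty$ with absolute value $|\cdot|$ normalized by $|\theta|=q$. $A^+$ is the set of monic polynomials of $A$ and $A^+(d)$ those of degree $d$. $t_1,\ldots,t_s$ are indeterminates; for $a\in A$, $a(t_i)$ denotes the polynomial obtained by replacing $\theta$ by $t_i$, and $\chi_{t_i}:A^+\to\mathbb{F}_q[t_1,\ldots,t_s]$, $a\mapsto a(t_i)$. A semi-character is a multiplicative monoid map from $A^+$; products of semi-characters are taken pointwise. $\mathbb{T}_s$ is the Tate algebra: formal power series in $t_1,\ldots,t_s$ with coefficients in $\mathbb{C}_\infty$ tending to $0$, with the Gauss norm. For a semi-character $\sigma$ and integers $n,d\ge0$, $S_d(n;\sigma)=\sum_{a\in A^+(d)}a^{-n}\sigma(a)$, and $$S_d\begin{pmatrix}\sigma_1&\cdots&\sigma_r\\ n_1&\cdots&n_r\end{pmatrix}=S_d(n_1;\sigma_1)\sum_{d>i_2>\cdots>i_r\ge0}S_{i_2}(n_2;\sigma_2)\cdots S_{i_r}(n_r;\sigma_r),$$ $$\zeta_C\begin{pmatrix}\sigma_1&\cdots&\sigma_r\\ n_1&\cdots&n_r\end{pmatrix}=\sum_{d\ge0}S_d\begin{pmatrix}\sigma_1&\cdots&\sigma_r\\ n_1&\cdots&n_r\end{pmatrix}.$$ *)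

theory Defs
  imports "HOL-Computational_Algebra.Computational_Algebra"
begin

text \<open>
  F_q is a finite field type 'a, q = CARD('a).
  A = F_q[theta] is 'a poly.  K_infinity = F_q((1/theta)) is realised as the
  formal Laurent series 'a fls in the variable X = 1/theta, so theta = fls_X_inv.
  The absolute value is |f| = q^(- subdegree_X f), so that |theta| = q.
  Since all coefficients (in t_1..t_s) of the multiple zeta value lie in K_infinity,
  (a closed subfield of C_infinity on which the absolute value restricts), the
  series is represented by its coefficient function on multi-indices.
\<close>

definition Kinf_of_poly :: "'a::field poly \<Rightarrow> 'a fls" where
  "Kinf_of_poly a = (\<Sum>i\<le>degree a. fls_const (coeff a i) * fls_X_inv ^ i)"

definition absK :: "'a::{finite,field} fls \<Rightarrow> real" where
  "absK f = (if f = 0 then 0 else real (card (UNIV :: 'a set)) powr (- real_of_int (fls_subdegree f)))"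

definition monics :: "nat \<Rightarrow> 'a::field poly set" where
  "monics d = {a. lead_coeff a = 1 \<and> degree a = d}"

text \<open>Multi-indices for monomials in t_0, ..., t_(s-1).\<close>
definition Idx :: "nat \<Rightarrow> (nat \<Rightarrow> nat) set" where
  "Idx s = {\<alpha>. \<forall>i\<ge>s. \<alpha> i = 0}"

definition mdeg :: "nat \<Rightarrow> (nat \<Rightarrow> nat) \<Rightarrow> nat" where
  "mdeg s \<alpha> = (\<Sum>i<s. \<alpha> i)"

text \<open>
  The semi-character sigma_j (j < r) is the product prod_(i<s) chi_(t_i)^(m j i),
  i.e. sigma_j(a) = prod_(i<s) a(t_i)^(m j i); m j i = 0 for all i gives the trivial one.
  For a tuple (a_0,...,a_(r-1)) of monic polynomials, the product
  prod_j sigma_j(a_j) = prod_(i<s) P_i(t_i) with P_i = prod_j a_j^(m j i),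
  hence its coefficient of t^alpha is prod_(i<s) coeff P_i (alpha i).
\<close>
definition char_coeff ::
  "nat \<Rightarrow> nat \<Rightarrow> (nat \<Rightarrow> nat \<Rightarrow> nat) \<Rightarrow> (nat \<Rightarrow> 'a::field poly) \<Rightarrow> (nat \<Rightarrow> nat) \<Rightarrow> 'a" where
  "char_coeff s r m as \<alpha> = (\<Prod>i<s. coeff (\<Prod>j<r. (as j) ^ (m j i)) (\<alpha> i))"

text \<open>
  Tuples (a_0,...,a_(r-1)) of monic polynomials with deg a_0 = d > deg a_1 > ... > deg a_(r-1)
  (indices shifted by one w.r.t. the paper: a_0 here is the paper's a_1).
\<close>
definition tuples :: "nat \<Rightarrow> nat \<Rightarrow> (nat \<Rightarrow> 'a::field poly) set" where
  "tuples r d = {as \<in> {..<r} \<rightarrow>\<^sub>E {a. lead_coeff a = 1}.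
      degree (as 0) = d \<and> (\<forall>j. Suc j < r \<longrightarrow> degree (as (Suc j)) < degree (as j))}"

text \<open>
  Coefficient of t^alpha in S_d(sigma_1 ... sigma_r; n_1 ... n_r) (multiplied out):
  sum over the tuples of prod_j a_j^(-n_j) times the coefficient of t^alpha of prod_j sigma_j(a_j).
\<close>
definition S_coeff ::
  "nat \<Rightarrow> nat \<Rightarrow> (nat \<Rightarrow> nat \<Rightarrow> nat) \<Rightarrow> (nat \<Rightarrow> nat) \<Rightarrow> nat \<Rightarrow> (nat \<Rightarrow> nat) \<Rightarrow> 'a::field fls" where
  "S_coeff s r m n d \<alpha> =
     (\<Sum>as\<in>tuples r d. (\<Prod>j<r. inverse (Kinf_of_poly (as j)) ^ (n j))
                         * fls_const (char_coeff s r m as \<alpha>))"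

end

theory Submission
  imports Defs
begin

unbundle fps_syntax


definition supp_on :: "nat set \<Rightarrow> ((nat \<Rightarrow> 'a) \<Rightarrow> 'b) \<Rightarrow> bool" where
  "supp_on S g \<longleftrightarrow> (\<forall>x y. (\<forall>i\<in>S. x i = y i) \<longrightarrow> g x = g y)"

inductive_set spn :: "(nat set \<Rightarrow> bool) \<Rightarrow> ((nat \<Rightarrow> 'a) \<Rightarrow> 'b::comm_ring_1) set" for P where
  spn_zero: "(\<lambda>_. 0) \<in> spn P"
| spn_gen: "P S \<Longrightarrow> supp_on S g \<Longrightarrow> h \<in> spn P \<Longrightarrow> (\<lambda>x. g x + h x) \<in> spn P"

lemma spn_single: "P S \<Longrightarrow> supp_on S g \<Longrightarrow> g \<in> spn P"
  using spn_gen[OF _ _ spn_zero, of P S g] by simp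

lemma spn_add: "f \<in> spn P \<Longrightarrow> h \<in> spn P \<Longrightarrow> (\<lambda>x. f x + h x) \<in> spn P"
proof (induction f rule: spn.induct)
  case spn_zero then show ?case by simp
next
  case (spn_gen S g h')
  then have "(\<lambda>x. h' x + h x) \<in> spn P" by simp
  from spn.spn_gen[OF spn_gen(1,2) this] show ?case by (simp add: add.assoc)
qed

lemma spn_sum: "(\<And>i. i \<in> A \<Longrightarrow> f i \<in> spn P) \<Longrightarrow> (\<lambda>x. \<Sum>i\<in>A. f i x) \<in> spn P"
proof (induction A rule: infinite_finite_induct)
  case (infinite A) then show ?case by (simp add: spn_zero)
next
  case empty then show ?case by (simp add: spn_zero)
next
  case (insert a A)
  then show ?case using spn_add[of "f a" P "\<lambda>x. \<Sum>i\<in>A. f i x"] by simp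
qed

lemma spn_mono: "f \<in> spn P \<Longrightarrow> (\<And>S. P S \<Longrightarrow> Q S) \<Longrightarrow> f \<in> spn Q"
  by (induction f rule: spn.induct) (auto intro: spn.intros)

lemma supp_on_mult: "supp_on S g \<Longrightarrow> supp_on S' h \<Longrightarrow> supp_on (S \<union> S') (\<lambda>x. g x * h x)"
  unfolding supp_on_def by (metis UnCI)

lemma spn_mult_single:
  assumes "h \<in> spn Q" "P S" "supp_on S g" "\<And>S'. Q S' \<Longrightarrow> R (S \<union> S')"
  shows "(\<lambda>x. g x * h x) \<in> spn R"
  using assms(1)
proof (induction h rule: spn.induct)
  case spn_zero then show ?case by (simp add: spn.spn_zero)
next
  case (spn_gen S' g' h')
  have "(\<lambda>x. g x * g' x + g x * h' x) \<in> spn R"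
    by (rule spn.spn_gen[OF assms(4)[OF spn_gen(1)] supp_on_mult[OF assms(3) spn_gen(2)] spn_gen(4)])
  then show ?case by (simp add: distrib_left)
qed

lemma spn_mult:
  assumes "f \<in> spn P" "h \<in> spn Q" "\<And>S S'. P S \<Longrightarrow> Q S' \<Longrightarrow> R (S \<union> S')"
  shows "(\<lambda>x. f x * h x) \<in> spn R"
  using assms(1)
proof (induction f rule: spn.induct)
  case spn_zero then show ?case by (simp add: spn.spn_zero)
next
  case (spn_gen S g h')
  have "(\<lambda>x. g x * h x) \<in> spn R" by (rule spn_mult_single[where P=P, OF assms(2) spn_gen(1,2)]) (rule assms(3)[OF spn_gen(1)])
  from spn_add[OF this spn_gen(4)] show ?case by (simp add: distrib_right)
qed

lemma supp_on_const: "supp_on {} (\<lambda>_. c)" by (simp add: supp_on_def)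

lemma spn_const: "P {} \<Longrightarrow> (\<lambda>_. c) \<in> spn P"
  by (rule spn_single[OF _ supp_on_const])

lemma card_UNIV_zero: "(of_nat (card (UNIV::'a::{finite,field} set)) :: 'a) = 0"
proof -
  have "(\<Sum>c\<in>(UNIV::'a set). c + 1) = (\<Sum>c\<in>UNIV. c)"
    by (rule sum.reindex_bij_witness[of _ "\<lambda>c. c - 1" "\<lambda>c. c + 1"]) auto
  then show ?thesis by (simp add: sum.distrib)
qed

lemma sum_PiE_supp_zero:
  fixes g :: "(nat \<Rightarrow> 'a::{finite,field}) \<Rightarrow> 'a"
  assumes "supp_on S g" "i \<in> D" "i \<notin> S" "finite D"
  shows "(\<Sum>x\<in>PiE D (\<lambda>_. UNIV). g x) = 0"
proof -
  define D' where "D' = D - {i}"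
  have D: "D = insert i D'" "i \<notin> D'" using assms(2) by (auto simp: D'_def)
  have "(\<Sum>x\<in>PiE D (\<lambda>_. UNIV). g x) = (\<Sum>(c,h)\<in>UNIV \<times> PiE D' (\<lambda>_. UNIV). g (h(i := c)))"
    unfolding D(1) PiE_insert_eq
    by (subst sum.reindex) (auto intro!: inj_combinator[OF D(2)] simp: case_prod_beta)
  also have "\<dots> = (\<Sum>c\<in>UNIV. \<Sum>h\<in>PiE D' (\<lambda>_. UNIV). g (h(i := c)))"
    by (simp add: sum.cartesian_product)
  also have "\<dots> = (\<Sum>c\<in>(UNIV::'a set). \<Sum>h\<in>PiE D' (\<lambda>_. UNIV). g h)"
    using assms(1,3) unfolding supp_on_def by (intro sum.cong refl) (metis fun_upd_other)
  also have "\<dots> = of_nat (card (UNIV::'a set)) * (\<Sum>h\<in>PiE D' (\<lambda>_. UNIV). g h)"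
    by simp
  finally show ?thesis by (simp add: card_UNIV_zero)
qed

lemma sum_PiE_spn_zero:
  fixes g :: "(nat \<Rightarrow> 'a::{finite,field}) \<Rightarrow> 'a"
  assumes "g \<in> spn P" "\<And>S. P S \<Longrightarrow> \<not> D \<subseteq> S" "finite D"
  shows "(\<Sum>x\<in>PiE D (\<lambda>_. UNIV). g x) = 0"
  using assms(1)
proof (induction g rule: spn.induct)
  case spn_zero then show ?case by simp
next
  case (spn_gen S g h)
  obtain i where "i \<in> D" "i \<notin> S" using assms(2)[OF spn_gen(1)] by blast
  then have "(\<Sum>x\<in>PiE D (\<lambda>_. UNIV). g x) = 0" using sum_PiE_supp_zero[OF spn_gen(2) _ _ assms(3)] by blast
  then show ?case using spn_gen(4) by (simp add: sum.distrib)
qed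



definition poly_of :: "nat \<Rightarrow> (nat \<Rightarrow> 'a::field) \<Rightarrow> 'a poly" where
  "poly_of d x = monom 1 d + (\<Sum>j\<in>{1..d}. monom (x j) (d - j))"

lemma coeff_poly_of: "coeff (poly_of d x) i = (if i = d then 1 else if i < d then x (d - i) else 0)"
proof -
  have "(\<Sum>j\<in>{1..d}. coeff (monom (x j) (d - j)) i) = (if i < d then x (d - i) else 0)"
  proof (cases "i < d")
    case True
    have "(\<Sum>j\<in>{1..d}. coeff (monom (x j) (d - j)) i) = (\<Sum>j\<in>{1..d}. if j = d - i then x j else 0)"
      using True by (intro sum.cong refl) (auto simp: coeff_monom)
    also have "\<dots> = x (d - i)" using True by (simp add: sum.delta)
    finally show ?thesis using True by simp
  next
    case False
    have "(\<Sum>j\<in>{1..d}. coeff (monom (x j) (d - j)) i) = (\<Sum>j\<in>{1..d}. 0)"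
      using False by (intro sum.cong refl) (auto simp: coeff_monom)
    then show ?thesis using False by simp
  qed
  then show ?thesis by (simp add: poly_of_def coeff_sum coeff_monom)
qed

lemma degree_poly_of: "degree (poly_of d x) = d"
  by (rule antisym) (auto intro!: degree_le le_degree simp: coeff_poly_of)

lemma lead_poly_of: "lead_coeff (poly_of d x) = 1"
  by (simp add: degree_poly_of coeff_poly_of)

lemma bij_poly_of: "bij_betw (poly_of d) (PiE {1..d} (\<lambda>_. UNIV)) (monics d)"
proof (rule bij_betw_imageI)
  show "inj_on (poly_of d) (PiE {1..d} (\<lambda>_. UNIV))"
  proof (rule inj_onI)
    fix x y assume xy: "x \<in> PiE {1..d} (\<lambda>_. UNIV)" "y \<in> PiE {1..d} (\<lambda>_. UNIV)" "poly_of d x = poly_of d y"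
    show "x = y"
    proof (rule PiE_ext[OF xy(1,2)])
      fix j assume j: "j \<in> {1..d}"
      have "coeff (poly_of d x) (d - j) = coeff (poly_of d y) (d - j)" using xy(3) by simp
      moreover have "d - j \<noteq> d" "d - j < d" "d - (d - j) = j" using j by auto
      ultimately show "x j = y j" by (simp add: coeff_poly_of)
    qed
  qed
next
  show "poly_of d ` PiE {1..d} (\<lambda>_. UNIV) = monics d"
  proof (intro equalityI subsetI)
    fix a assume "a \<in> poly_of d ` PiE {1..d} (\<lambda>_. UNIV)"
    then show "a \<in> monics d" by (auto simp: monics_def degree_poly_of coeff_poly_of)
  next
    fix a assume a: "a \<in> monics d"
    define x where "x = restrict (\<lambda>j. coeff a (d - j)) {1..d}"
    have "poly_of d x = a"
    proof (rule poly_eqI)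
      fix i show "coeff (poly_of d x) i = coeff a i"
        using a by (auto simp: coeff_poly_of x_def monics_def) (metis coeff_eq_0 linorder_neqE_nat)
    qed
    moreover have "x \<in> PiE {1..d} (\<lambda>_. UNIV)" by (simp add: x_def)
    ultimately show "a \<in> poly_of d ` PiE {1..d} (\<lambda>_. UNIV)" by blast
  qed
qed

lemma Kinf_nth: "Kinf_of_poly a $$ k = (if k \<le> 0 then coeff a (nat (-k)) else 0)"
proof -
  have "Kinf_of_poly a $$ k = (\<Sum>i\<le>degree a. coeff a i * (if k = - int i then 1 else 0))"
    by (simp add: Kinf_of_poly_def fls_nth_sum)
  also have "\<dots> = (\<Sum>i\<le>degree a. if i = nat (-k) \<and> k \<le> 0 then coeff a i else 0)"
    by (intro sum.cong refl) auto
  also have "\<dots> = (if k \<le> 0 then coeff a (nat (-k)) else 0)"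
    by (auto simp: sum.delta coeff_eq_0)
  finally show ?thesis .
qed

definition Rf :: "'a::field poly \<Rightarrow> 'a fps" where
  "Rf a = fps_of_poly (reflect_poly a)"

lemma Kinf_shift: "Kinf_of_poly a = fls_shift (int (degree a)) (fps_to_fls (Rf a))"
  apply (rule fls_eqI)
  apply (auto simp: Kinf_nth Rf_def coeff_reflect_poly nat_diff_distrib coeff_eq_0 intro!: arg_cong[where f="coeff a"])
  done

lemma Rf0: "lead_coeff a = 1 \<Longrightarrow> Rf a $ 0 = 1"
  by (simp add: Rf_def coeff_reflect_poly)

lemma inv_Kinf: "lead_coeff a = 1 \<Longrightarrow>
   inverse (Kinf_of_poly a) = fls_shift (- int (degree a)) (fps_to_fls (inverse (Rf a)))"
  by (simp add: Kinf_shift fls_inverse_shift fls_inverse_fps_to_fls Rf0)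

definition Pw :: "nat \<Rightarrow> nat set \<Rightarrow> bool" where
  "Pw k S \<longleftrightarrow> finite S \<and> 0 \<notin> S \<and> \<Sum>S \<le> k"

lemma Pw_union: "Pw i S \<Longrightarrow> Pw j S' \<Longrightarrow> Pw (i + j) (S \<union> S')"
  unfolding Pw_def using sum_Un_nat[of S S' id] by auto

lemma Pw_union': "Pw i S \<Longrightarrow> Pw j S' \<Longrightarrow> i + j \<le> n \<Longrightarrow> Pw n (S \<union> S')"
  unfolding Pw_def using sum_Un_nat[of S S' id] by auto

lemma Pw_mono: "Pw i S \<Longrightarrow> i \<le> j \<Longrightarrow> Pw j S"
  unfolding Pw_def by auto

lemma spn_neg: "P {} \<Longrightarrow> f \<in> spn P \<Longrightarrow> (\<lambda>x. - f x) \<in> spn P"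
  using spn_mult_single[of f P P "{}" "\<lambda>_. -1" P] by (simp add: supp_on_const)

lemma Rf_spn: "(\<lambda>x. Rf (poly_of d x) $ k) \<in> spn (Pw k)"
proof (cases "k = 0 \<or> k > d")
  case True
  have "supp_on {} (\<lambda>x. Rf (poly_of d x) $ k)"
    using True by (auto simp: supp_on_def Rf_def coeff_reflect_poly degree_poly_of coeff_poly_of)
  moreover have "Pw k {}" by (simp add: Pw_def)
  ultimately show ?thesis by (rule spn_single[rotated])
next
  case False
  have "supp_on {k} (\<lambda>x. Rf (poly_of d x) $ k)"
    using False by (auto simp: supp_on_def Rf_def coeff_reflect_poly degree_poly_of coeff_poly_of)
  then show ?thesis by (rule spn_single[rotated]) (use False in \<open>auto simp: Pw_def\<close>)
qed

lemma inv_spn: "(\<lambda>x::nat \<Rightarrow> 'a::field. inverse (Rf (poly_of d x)) $ k) \<in> spn (Pw k)"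
proof (induction k rule: less_induct)
  case (less n)
  show ?case
  proof (cases n)
    case 0
    have "Pw 0 {}" by (simp add: Pw_def)
    then show ?thesis using spn_const[of "Pw 0" 1] 0 by (simp add: Rf0 lead_poly_of)
  next
    case (Suc n')
    have eq: "inverse (Rf (poly_of d x)) $ n =
       - (\<Sum>i\<in>{1..n}. Rf (poly_of d x) $ i * inverse (Rf (poly_of d x)) $ (n - i))" for x
    proof -
      let ?R = "Rf (poly_of d x)"
      have "(?R * inverse ?R) $ n = 0" using Suc by (simp add: inverse_mult_eq_1' Rf0 lead_poly_of)
      then have "(\<Sum>i=0..n. ?R $ i * inverse ?R $ (n - i)) = 0" by (simp add: fps_mult_nth)
      moreover have "{0..n} = insert 0 {1..n}" by auto
      ultimately show ?thesis by (simp add: Rf0 lead_poly_of eq_neg_iff_add_eq_0)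
    qed
    have "(\<lambda>x::nat \<Rightarrow> 'a. \<Sum>i\<in>{1..n}. Rf (poly_of d x) $ i * inverse (Rf (poly_of d x)) $ (n - i)) \<in> spn (Pw n)"
    proof (rule spn_sum)
      fix i assume i: "i \<in> {1..n}"
      show "(\<lambda>x::nat \<Rightarrow> 'a. Rf (poly_of d x) $ i * inverse (Rf (poly_of d x)) $ (n - i)) \<in> spn (Pw n)"
      proof -
        have ni: "n - i < n" using i Suc by auto
        show ?thesis proof -
          have 1: "\<And>S S'. Pw i S \<Longrightarrow> Pw (n - i) S' \<Longrightarrow> Pw n (S \<union> S')"
            using i by (metis Pw_union' le_add_diff_inverse order_refl atLeastAtMost_iff)
          show ?thesis using spn_mult[of "\<lambda>x. Rf (poly_of d x) $ i" "Pw i" "\<lambda>x. inverse (Rf (poly_of d x)) $ (n - i)" "Pw (n - i)" "Pw n", OF Rf_spn[of d i] less.IH[OF ni] 1] by simp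
        qed
      qed
    qed
    moreover have "Pw n {}" by (simp add: Pw_def)
    ultimately show ?thesis using spn_neg by (simp add: eq)
  qed
qed

lemma pow_spn:
  assumes "\<And>k. (\<lambda>x. G x $ k) \<in> spn (Pw k)"
  shows "(\<lambda>x. (G x ^ e) $ k) \<in> spn (Pw k)"
proof (induction e arbitrary: k)
  case 0
  have "Pw k {}" by (simp add: Pw_def)
  then show ?case using spn_const[of "Pw k" "if k = 0 then 1 else 0"]
    by (simp add: fps_one_nth)
next
  case (Suc e)
  have "(\<lambda>x. \<Sum>i=0..k. G x $ i * (G x ^ e) $ (k - i)) \<in> spn (Pw k)"
    by (intro spn_sum spn_mult[OF assms Suc.IH]) (auto intro: Pw_union')
  then show ?case by (simp add: fps_mult_nth)
qed



definition Pc :: "nat \<Rightarrow> nat set \<Rightarrow> bool" where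
  "Pc k S \<longleftrightarrow> finite S \<and> card S \<le> k"

lemma Pc_union: "Pc i S \<Longrightarrow> Pc j S' \<Longrightarrow> i + j \<le> n \<Longrightarrow> Pc n (S \<union> S')"
  unfolding Pc_def using card_Un_le[of S S'] by auto

lemma coeff_poly_of_spn: "(\<lambda>x::nat \<Rightarrow> 'a::field. coeff (poly_of d x) i) \<in> spn (Pc 1)"
proof (rule spn_single)
  show "Pc 1 {d - i}" by (simp add: Pc_def)
  show "supp_on {d - i} (\<lambda>x::nat \<Rightarrow> 'a::field. coeff (poly_of d x) i)"
    by (auto simp: supp_on_def coeff_poly_of)
qed

lemma coeff_pow_spn: "(\<lambda>x::nat \<Rightarrow> 'a::field. coeff (poly_of d x ^ e * Q) k) \<in> spn (Pc e)"
proof (induction e arbitrary: k)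
  case 0
  have "Pc 0 {}" by (simp add: Pc_def)
  then show ?case using spn_const[of "Pc 0" "coeff Q k"] by simp
next
  case (Suc e)
  have "(\<lambda>x::nat \<Rightarrow> 'a. \<Sum>i\<le>k. coeff (poly_of d x) i * coeff (poly_of d x ^ e * Q) (k - i)) \<in> spn (Pc (Suc e))"
  proof (rule spn_sum)
    fix i
    have 1: "\<And>S S'. Pc 1 S \<Longrightarrow> Pc e S' \<Longrightarrow> Pc (Suc e) (S \<union> S')" by (rule Pc_union) auto
    show "(\<lambda>x::nat \<Rightarrow> 'a. coeff (poly_of d x) i * coeff (poly_of d x ^ e * Q) (k - i)) \<in> spn (Pc (Suc e))"
      using spn_mult[of "\<lambda>x. coeff (poly_of d x) i" "Pc 1" "\<lambda>x. coeff (poly_of d x ^ e * Q) (k - i)" "Pc e" "Pc (Suc e)",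
          OF coeff_poly_of_spn Suc.IH 1] by simp
  qed
  then show ?case by (simp add: coeff_mult mult.assoc)
qed

lemma spn_prod:
  fixes f :: "nat \<Rightarrow> (nat \<Rightarrow> 'a) \<Rightarrow> 'b::comm_ring_1"
  shows "(\<And>i. i < s \<Longrightarrow> f i \<in> spn (Pc (e i))) \<Longrightarrow> (\<lambda>x. \<Prod>i<s. f i x) \<in> spn (Pc (\<Sum>i<s. e i))"
proof (induction s)
  case 0
  have "Pc 0 {}" by (simp add: Pc_def)
  then show ?case using spn_const[of "Pc 0" 1] by simp
next
  case (Suc s)
  have 1: "\<And>S S'. Pc (\<Sum>i<s. e i) S \<Longrightarrow> Pc (e s) S' \<Longrightarrow> Pc (\<Sum>i<Suc s. e i) (S \<union> S')"
    by (rule Pc_union) auto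
  have 2: "\<And>i. i < s \<Longrightarrow> f i \<in> spn (Pc (e i))" using Suc.prems by simp
  show ?case
    using spn_mult[of "\<lambda>x. \<Prod>i<s. f i x" _ "f s" _ "Pc (\<Sum>i<Suc s. e i)", OF Suc.IH[OF 2] Suc.prems 1] by simp
qed

lemma char_spn:
  assumes "r \<ge> 1"
  shows "(\<lambda>x::nat \<Rightarrow> 'a::field. char_coeff s r m (t(0 := poly_of d x)) \<alpha>) \<in> spn (Pc (\<Sum>i<s. m 0 i))"
proof -
  have eq: "char_coeff s r m (t(0 := poly_of d x)) \<alpha> =
     (\<Prod>i<s. coeff (poly_of d x ^ m 0 i * (\<Prod>j\<in>{1..<r}. t j ^ m j i)) (\<alpha> i))" for x :: "nat \<Rightarrow> 'a"
  proof -
    have "{..<r} = insert 0 {1..<r}" using assms by auto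
    then have "(\<Prod>j<r. (t(0 := poly_of d x)) j ^ m j i) = poly_of d x ^ m 0 i * (\<Prod>j\<in>{1..<r}. t j ^ m j i)" for i
      by (simp add: prod.insert)
    then show ?thesis by (simp add: char_coeff_def)
  qed
  show ?thesis unfolding eq by (rule spn_prod[where f="\<lambda>i x. coeff (poly_of d x ^ m 0 i * (\<Prod>j\<in>{1..<r}. t j ^ m j i)) (\<alpha> i)"]) (rule coeff_pow_spn)
qed



lemma sum_ge_tri: "finite A \<Longrightarrow> 0 \<notin> A \<Longrightarrow> card A * (card A + 1) \<le> 2 * \<Sum>A"
proof (induction "card A" arbitrary: A)
  case 0 then show ?case by simp
next
  case (Suc n A)
  then have ne: "A \<noteq> {}" by auto
  define a where "a = Max A"
  have aA: "a \<in> A" using Suc.prems ne by (simp add: a_def)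
  have "A \<subseteq> {1..a}" using Suc.prems by (auto simp: a_def) (metis Suc_leI neq0_conv)
  then have ca: "card A \<le> a" using card_mono[of "{1..a}" A] by simp
  have c': "card (A - {a}) = n" using Suc.hyps(2) aA Suc.prems by simp
  have IH: "n * (n + 1) \<le> 2 * \<Sum>(A - {a})"
    using Suc.hyps(1)[of "A - {a}"] c' Suc.prems by simp
  have "\<Sum>A = a + \<Sum>(A - {a})" using Suc.prems aA by (simp add: sum.remove)
  then show ?case using IH ca Suc.hyps(2)[symmetric] by (simp add: algebra_simps)
qed

lemma cover_bound:
  assumes "Pw K A" "Pc M B" "{1..d} \<subseteq> A \<union> B"
  shows "(d - M) * (d - M + 1) \<le> 2 * K"
proof -
  define A' where "A' = {1..d} - B"
  have A'A: "A' \<subseteq> A" using assms(3) by (auto simp: A'_def)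
  have fin: "finite A" "0 \<notin> A" "\<Sum>A \<le> K" using assms(1) by (auto simp: Pw_def)
  have "card {1..d} - card B \<le> card A'" unfolding A'_def by (rule diff_card_le_card_Diff) (use assms(2) in \<open>simp add: Pc_def\<close>)
  then have c: "d - M \<le> card A'" using assms(2) by (auto simp: Pc_def)
  have "card A' * (card A' + 1) \<le> 2 * \<Sum>A'"
    by (rule sum_ge_tri) (use A'A fin in \<open>auto simp: A'_def\<close>)
  also have "\<Sum>A' \<le> \<Sum>A" by (rule sum_mono2[OF fin(1) A'A]) auto
  finally have "card A' * (card A' + 1) \<le> 2 * K" using fin(3) by linarith
  moreover have "(d - M) * (d - M + 1) \<le> card A' * (card A' + 1)"
    using c by (intro mult_le_mono) auto
  ultimately show ?thesis by linarith
qed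

lemma fls_shift_power: "(fls_shift (- int D) F) ^ e = fls_shift (- int (D * e)) (F ^ e)"
  by (induction e) (simp_all add: fls_times_both_shifted_simp algebra_simps)

lemma inv_Kinf_pow: "lead_coeff a = 1 \<Longrightarrow>
   inverse (Kinf_of_poly a) ^ e = fls_shift (- int (degree a * e)) (fps_to_fls (inverse (Rf a) ^ e))"
  by (simp add: inv_Kinf fls_shift_power fps_to_fls_power)

lemma prod_shift:
  assumes "finite J" "\<forall>j\<in>J. lead_coeff (t j) = 1"
  shows "\<exists>E W'. (\<Prod>j\<in>J. inverse (Kinf_of_poly (t j :: 'a::field poly)) ^ n j) = fls_shift (- int E) (fps_to_fls W')"
  using assms
proof (induction J rule: finite_induct)
  case empty
  show ?case by (rule exI[of _ 0], rule exI[of _ 1]) simp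
next
  case (insert j J)
  then obtain E W' where EW: "(\<Prod>j\<in>J. inverse (Kinf_of_poly (t j)) ^ n j) = fls_shift (- int E) (fps_to_fls W')"
    by auto
  have "(\<Prod>j\<in>insert j J. inverse (Kinf_of_poly (t j)) ^ n j) =
     fls_shift (- int (degree (t j) * n j)) (fps_to_fls (inverse (Rf (t j)) ^ n j)) * fls_shift (- int E) (fps_to_fls W')"
    using insert by (simp add: EW inv_Kinf_pow[of "t j"])
  also have "\<dots> = fls_shift (- int (degree (t j) * n j + E)) (fps_to_fls (inverse (Rf (t j)) ^ n j * W'))"
    by (simp add: fls_times_both_shifted_simp fls_times_fps_to_fls algebra_simps)
  finally show ?case by blast
qed

definition tm :: "nat \<Rightarrow> nat \<Rightarrow> (nat \<Rightarrow> nat \<Rightarrow> nat) \<Rightarrow> (nat \<Rightarrow> nat) \<Rightarrow> (nat \<Rightarrow> nat) \<Rightarrow> (nat \<Rightarrow> 'a::field poly) \<Rightarrow> 'a fls" where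
  "tm s r m n \<alpha> as = (\<Prod>j<r. inverse (Kinf_of_poly (as j)) ^ (n j)) * fls_const (char_coeff s r m as \<alpha>)"

lemma S_coeff_term: "S_coeff s r m n d \<alpha> = (\<Sum>as\<in>tuples r d. tm s r m n \<alpha> as)"
  by (simp add: S_coeff_def tm_def)

lemma core:
  fixes t :: "nat \<Rightarrow> 'a::{finite,field} poly" and k :: int
  assumes r: "r \<ge> 1" and t: "\<forall>j\<in>{1..<r}. lead_coeff (t j) = 1"
    and k: "2 * k < int ((d - (\<Sum>i<s. m 0 i)) * (d - (\<Sum>i<s. m 0 i) + 1))"
  shows "(\<Sum>x\<in>PiE {1..d} (\<lambda>_. UNIV). tm s r m n \<alpha> (t(0 := poly_of d x))) $$ k = 0"
proof -
  define M0 where "M0 = (\<Sum>i<s. m 0 i)"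
  obtain E W' where EW: "(\<Prod>j\<in>{1..<r}. inverse (Kinf_of_poly (t j)) ^ n j) = fls_shift (- int E) (fps_to_fls W')"
    using prod_shift[of "{1..<r}" t n] t by auto
  define G where "G x = inverse (Rf (poly_of d x)) ^ n 0" for x :: "nat \<Rightarrow> 'a"
  define c where "c x = char_coeff s r m (t(0 := poly_of d x)) \<alpha>" for x :: "nat \<Rightarrow> 'a"
  have rr: "{..<r} = insert 0 {1..<r}" using r by auto
  have teq: "tm s r m n \<alpha> (t(0 := poly_of d x)) =
      fls_shift (- int (d * n 0 + E)) (fps_to_fls (G x * W')) * fls_const (c x)" for x
  proof -
    have "(\<Prod>j<r. inverse (Kinf_of_poly ((t(0 := poly_of d x)) j)) ^ n j) =
        inverse (Kinf_of_poly (poly_of d x)) ^ n 0 * (\<Prod>j\<in>{1..<r}. inverse (Kinf_of_poly (t j)) ^ n j)"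
      unfolding rr by (simp add: prod.insert)
    also have "\<dots> = fls_shift (- int (d * n 0)) (fps_to_fls (G x)) * fls_shift (- int E) (fps_to_fls W')"
      unfolding EW using inv_Kinf_pow[OF lead_poly_of[of d x], of "n 0"] by (simp add: degree_poly_of G_def)
    also have "\<dots> = fls_shift (- int (d * n 0 + E)) (fps_to_fls (G x * W'))"
      by (simp add: fls_times_both_shifted_simp fls_times_fps_to_fls algebra_simps)
    finally show ?thesis by (simp add: tm_def c_def)
  qed
  have nth: "tm s r m n \<alpha> (t(0 := poly_of d x)) $$ k =
      (if k - int (d * n 0 + E) < 0 then 0 else (G x * W') $ nat (k - int (d * n 0 + E)) * c x)" for x
    unfolding teq by (simp add: fls_mult_const_nth(2) algebra_simps)
  show ?thesis
  proof (cases "k - int (d * n 0 + E) < 0")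
    case True
    then show ?thesis by (simp add: fls_nth_sum nth)
  next
    case False
    define K where "K = nat (k - int (d * n 0 + E))"
    have "int K \<le> k" using False unfolding K_def by linarith
    then have "int (2 * K) < int ((d - M0) * (d - M0 + 1))" using k unfolding M0_def by linarith
    then have K: "2 * K < (d - M0) * (d - M0 + 1)" by (simp only: of_nat_less_iff)
    define Q where "Q S \<longleftrightarrow> (\<exists>A B. S = A \<union> B \<and> Pw K A \<and> Pc M0 B)" for S
    have "(\<lambda>x. (G x * W') $ K) \<in> spn (Pw K)"
    proof -
      have "(\<lambda>x. \<Sum>i=0..K. G x $ i * W' $ (K - i)) \<in> spn (Pw K)"
      proof (rule spn_sum)
        fix i assume i: "i \<in> {0..K}"
        have g: "(\<lambda>x. G x $ i) \<in> spn (Pw K)"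
          unfolding G_def by (rule spn_mono[OF pow_spn[OF inv_spn]]) (use i in \<open>auto intro: Pw_mono\<close>)
        have 1: "\<And>S S'. Pw K S \<Longrightarrow> S' = {} \<Longrightarrow> Pw K (S \<union> S')" by simp
        show "(\<lambda>x. G x $ i * W' $ (K - i)) \<in> spn (Pw K)"
          using spn_mult[of "\<lambda>x. G x $ i" _ "\<lambda>_. W' $ (K - i)" "\<lambda>S. S = {}" "Pw K", OF g spn_const 1] by simp
      qed
      then show ?thesis by (simp add: fps_mult_nth)
    qed
    moreover have "c \<in> spn (Pc M0)" unfolding c_def M0_def by (rule char_spn[OF r])
    moreover have "\<And>S S'. Pw K S \<Longrightarrow> Pc M0 S' \<Longrightarrow> Q (S \<union> S')" unfolding Q_def by blast
    ultimately have sp: "(\<lambda>x. (G x * W') $ K * c x) \<in> spn Q" by (rule spn_mult)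
    have "(\<Sum>x\<in>PiE {1..d} (\<lambda>_. UNIV). (G x * W') $ K * c x) = 0"
    proof (rule sum_PiE_spn_zero[OF sp])
      fix S assume "Q S"
      then obtain A B where "S = A \<union> B" "Pw K A" "Pc M0 B" by (auto simp: Q_def)
      then show "\<not> {1..d} \<subseteq> S" using cover_bound[of K A M0 B d] K by auto
    qed simp
    then show ?thesis using False by (simp add: fls_nth_sum nth K_def)
  qed
qed



definition Tl :: "nat \<Rightarrow> nat \<Rightarrow> (nat \<Rightarrow> 'a::field poly) set" where
  "Tl r d = (\<lambda>as. as(0 := undefined)) ` tuples r d"

lemma tuples_upd:
  assumes "as \<in> tuples r d" "a \<in> monics d" "r \<ge> 1"
  shows "as(0 := a) \<in> tuples r d"
proof -
  have pi: "as \<in> {..<r} \<rightarrow>\<^sub>E {a. lead_coeff a = 1}" and deg: "degree (as 0) = d"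
    and dec: "\<forall>j. Suc j < r \<longrightarrow> degree (as (Suc j)) < degree (as j)"
    using assms(1) by (auto simp: tuples_def)
  have "as(0 := a) \<in> {..<r} \<rightarrow>\<^sub>E {a. lead_coeff a = 1}"
    using pi assms(2,3) by (auto simp: monics_def PiE_def extensional_def)
  moreover have "\<forall>j. Suc j < r \<longrightarrow> degree ((as(0 := a)) (Suc j)) < degree ((as(0 := a)) j)"
    using dec deg assms(2) by (auto simp: monics_def)
  ultimately show ?thesis using assms(2) by (auto simp: tuples_def monics_def)
qed

lemma Tl_lead: "t \<in> Tl r d \<Longrightarrow> \<forall>j\<in>{1..<r}. lead_coeff (t j) = 1"
  by (auto simp: Tl_def tuples_def PiE_def Pi_def)

lemma tuples_decomp:
  assumes r: "r \<ge> 1"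
  shows "(\<Sum>as\<in>tuples r d. f as) = (\<Sum>t\<in>Tl r d. \<Sum>x\<in>PiE {1..d} (\<lambda>_. UNIV). f (t(0 := poly_of d x)))"
proof -
  have bij: "bij_betw (\<lambda>(a, t). t(0 := a)) (monics d \<times> Tl r d) (tuples r d)"
  proof (rule bij_betw_byWitness[where f' = "\<lambda>as. (as 0, as(0 := undefined))"])
    show "\<forall>p\<in>monics d \<times> Tl r d. (\<lambda>as. (as 0, as(0 := undefined))) ((\<lambda>(a, t). t(0 := a)) p) = p"
      by (auto simp: Tl_def)
    show "\<forall>as\<in>tuples r d. (\<lambda>(a, t). t(0 := a)) ((\<lambda>as. (as 0, as(0 := undefined))) as) = as"
      by auto
    show "(\<lambda>(a, t). t(0 := a)) ` (monics d \<times> Tl r d) \<subseteq> tuples r d"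
      using tuples_upd[OF _ _ r] by (auto simp: Tl_def)
    show "(\<lambda>as. (as 0, as(0 := undefined))) ` tuples r d \<subseteq> monics d \<times> Tl r d"
      using r by (auto simp: Tl_def tuples_def monics_def PiE_def Pi_def)
  qed
  have "(\<Sum>as\<in>tuples r d. f as) = (\<Sum>p\<in>monics d \<times> Tl r d. f ((\<lambda>(a, t). t(0 := a)) p))"
    by (rule sum.reindex_bij_betw[OF bij, symmetric])
  also have "\<dots> = (\<Sum>a\<in>monics d. \<Sum>t\<in>Tl r d. f (t(0 := a)))"
    by (simp add: sum.cartesian_product case_prod_beta)
  also have "\<dots> = (\<Sum>t\<in>Tl r d. \<Sum>a\<in>monics d. f (t(0 := a)))"
    by (rule sum.swap)
  also have "\<dots> = (\<Sum>t\<in>Tl r d. \<Sum>x\<in>PiE {1..d} (\<lambda>_. UNIV). f (t(0 := poly_of d x)))"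
    by (intro sum.cong refl sum.reindex_bij_betw[OF bij_poly_of, symmetric])
  finally show ?thesis .
qed

lemma S_vanish:
  fixes k :: int
  assumes r: "r \<ge> 1"
    and k: "2 * k < int ((d - (\<Sum>i<s. m 0 i)) * (d - (\<Sum>i<s. m 0 i) + 1))"
  shows "(S_coeff s r m n d \<alpha> :: 'a::{finite,field} fls) $$ k = 0"
proof -
  have "(S_coeff s r m n d \<alpha> :: 'a fls) $$ k =
     (\<Sum>t\<in>Tl r d. (\<Sum>x\<in>PiE {1..d} (\<lambda>_. UNIV). tm s r m n \<alpha> (t(0 := poly_of d x))) $$ k)"
    by (simp add: S_coeff_term tuples_decomp[OF r] fls_nth_sum)
  also have "\<dots> = 0"
  proof (intro sum.neutral ballI)
    fix t :: "nat \<Rightarrow> 'a poly" assume "t \<in> Tl r d"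
    from Tl_lead[OF this] show "(\<Sum>x\<in>PiE {1..d} (\<lambda>_. UNIV). tm s r m n \<alpha> (t(0 := poly_of d x))) $$ k = (0::'a)"
      by (rule core[where m=m and s=s and d=d and r=r and k=k, OF r _ k])
  qed
  finally show ?thesis .
qed

lemma tuples_deg: "as \<in> tuples r d \<Longrightarrow> j < r \<Longrightarrow> degree (as j) \<le> d"
proof (induction j)
  case 0 then show ?case by (simp add: tuples_def)
next
  case (Suc j)
  then have "degree (as (Suc j)) < degree (as j)" by (simp add: tuples_def)
  with Suc show ?case by simp
qed

lemma char_nonzero_mdeg:
  assumes "as \<in> tuples r d" "char_coeff s r m as \<alpha> \<noteq> (0::'a::field)"
  shows "mdeg s \<alpha> \<le> d * (\<Sum>i<s. \<Sum>j<r. m j i)"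
proof -
  have "\<alpha> i \<le> d * (\<Sum>j<r. m j i)" if i: "i < s" for i
  proof -
    have "coeff (\<Prod>j<r. as j ^ m j i) (\<alpha> i) \<noteq> 0"
      using assms(2) i by (auto simp: char_coeff_def)
    then have "\<alpha> i \<le> degree (\<Prod>j<r. as j ^ m j i)" by (rule le_degree)
    also have "\<dots> \<le> (\<Sum>j<r. degree (as j ^ m j i))"
      using degree_prod_sum_le[of "{..<r}" "\<lambda>j. as j ^ m j i"] by simp
    also have "\<dots> \<le> (\<Sum>j<r. d * m j i)"
    proof (rule sum_mono)
      fix j assume "j \<in> {..<r}"
      then have "degree (as j) \<le> d" using tuples_deg[OF assms(1)] by simp
      then show "degree (as j ^ m j i) \<le> d * m j i"
        using degree_power_le[of "as j" "m j i"] by (metis dual_order.trans mult_le_mono1)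
    qed
    finally show ?thesis by (simp add: sum_distrib_left)
  qed
  then have "mdeg s \<alpha> \<le> (\<Sum>i<s. d * (\<Sum>j<r. m j i))" unfolding mdeg_def by (intro sum_mono) auto
  then show ?thesis by (simp add: sum_distrib_left)
qed

lemma S_zero:
  assumes "mdeg s \<alpha> > d * (\<Sum>i<s. \<Sum>j<r. m j i)"
  shows "(S_coeff s r m n d \<alpha> :: 'a::field fls) = 0"
  unfolding S_coeff_def
proof (rule sum.neutral, rule ballI)
  fix as :: "nat \<Rightarrow> 'a poly" assume "as \<in> tuples r d"
  then have "char_coeff s r m as \<alpha> = 0" using char_nonzero_mdeg assms by fastforce
  then show "(\<Prod>j<r. inverse (Kinf_of_poly (as j)) ^ n j) * fls_const (char_coeff s r m as \<alpha>) = 0" by simp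
qed



definition cc :: "nat \<Rightarrow> nat \<Rightarrow> (nat \<Rightarrow> nat \<Rightarrow> nat) \<Rightarrow> (nat \<Rightarrow> nat) \<Rightarrow> (nat \<Rightarrow> nat) \<Rightarrow> 'a::{finite,field} fls" where
  "cc s r m n \<alpha> = fps_to_fls (Abs_fps (\<lambda>k. \<Sum>d<k + (\<Sum>i<s. m 0 i) + 1. S_coeff s r m n d \<alpha> $$ int k))"

lemma cc_nth: "cc s r m n \<alpha> $$ k = (if k < 0 then 0 else (\<Sum>d<nat k + (\<Sum>i<s. m 0 i) + 1. S_coeff s r m n d \<alpha> $$ k))"
  by (simp add: cc_def)

lemma tri_gt: "k + 1 \<le> (x::nat) \<Longrightarrow> 2 * k < x * (x + 1)"
proof -
  assume "k + 1 \<le> x"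
  then have "(k + 1) * (k + 2) \<le> x * (x + 1)" by (intro mult_le_mono) auto
  then show ?thesis by (simp add: algebra_simps)
qed

lemma S_tail_zero:
  assumes "r \<ge> 1" "k + (\<Sum>i<s. m 0 i) + 1 \<le> d"
  shows "(S_coeff s r m n d \<alpha> :: 'a::{finite,field} fls) $$ int k = 0"
proof (rule S_vanish[OF assms(1)])
  have "2 * k < (d - (\<Sum>i<s. m 0 i)) * (d - (\<Sum>i<s. m 0 i) + 1)"
    by (rule tri_gt) (use assms(2) in linarith)
  then show "2 * int k < int ((d - (\<Sum>i<s. m 0 i)) * (d - (\<Sum>i<s. m 0 i) + 1))" by linarith
qed

lemma S_neg_zero:
  assumes "r \<ge> 1" "k < 0"
  shows "(S_coeff s r m n d \<alpha> :: 'a::{finite,field} fls) $$ k = 0"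
proof (rule S_vanish[OF assms(1)])
  have "0 \<le> int ((d - (\<Sum>i<s. m 0 i)) * (d - (\<Sum>i<s. m 0 i) + 1))" by (rule of_nat_0_le_iff)
  then show "2 * k < int ((d - (\<Sum>i<s. m 0 i)) * (d - (\<Sum>i<s. m 0 i) + 1))" using assms(2) by linarith
qed

lemma conv:
  assumes r: "r \<ge> 1" and D: "N + (\<Sum>i<s. m 0 i) + 1 \<le> D" and k: "k < int N"
  shows "((\<Sum>d<D. S_coeff s r m n d \<alpha>) - (cc s r m n \<alpha> :: 'a::{finite,field} fls)) $$ k = 0"
proof (cases "k < 0")
  case True
  then show ?thesis by (simp add: fls_nth_sum cc_nth S_neg_zero[OF r])
next
  case False
  define k' where "k' = nat k"
  have kk: "k = int k'" using False by (simp add: k'_def)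
  define B where "B = k' + (\<Sum>i<s. m 0 i) + 1"
  have BD: "B \<le> D" using D k kk by (simp add: B_def)
  have "(\<Sum>d<D. S_coeff s r m n d \<alpha> $$ k) = (\<Sum>d<B. (S_coeff s r m n d \<alpha> :: 'a fls) $$ k)"
  proof (rule sum.mono_neutral_right)
    show "\<forall>i\<in>{..<D} - {..<B}. (S_coeff s r m n i \<alpha> :: 'a fls) $$ k = 0"
      using S_tail_zero[OF r] by (auto simp: kk B_def)
  qed (use BD in auto)
  then show ?thesis by (simp add: fls_nth_sum cc_nth kk B_def)
qed

definition VV :: "nat \<Rightarrow> nat \<Rightarrow> nat" where
  "VV M x = (x - M) * (x - M + 1)"

lemma VV_mono: "x \<le> y \<Longrightarrow> VV M x \<le> VV M y"
  unfolding VV_def by (intro mult_le_mono) auto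

lemma cc_low:
  assumes r: "r \<ge> 1" and k: "2 * k < int (VV (\<Sum>i<s. m 0 i) (mdeg s \<alpha> div ((\<Sum>i<s. \<Sum>j<r. m j i) + 1)))"
  shows "(cc s r m n \<alpha> :: 'a::{finite,field} fls) $$ k = 0"
proof -
  define P where "P = (\<Sum>i<s. \<Sum>j<r. m j i) + 1"
  have "(S_coeff s r m n d \<alpha> :: 'a fls) $$ k = 0" for d
  proof (cases "mdeg s \<alpha> > d * (\<Sum>i<s. \<Sum>j<r. m j i)")
    case True
    then show ?thesis by (simp add: S_zero)
  next
    case False
    then have "mdeg s \<alpha> \<le> d * P" unfolding P_def by (simp add: algebra_simps)
    then have "mdeg s \<alpha> div P \<le> (d * P) div P" by (rule div_le_mono)
    moreover have "(d * P) div P = d" using nonzero_mult_div_cancel_right[of P d] by (simp add: P_def)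
    ultimately have "mdeg s \<alpha> div P \<le> d" by simp
    then have "VV (\<Sum>i<s. m 0 i) (mdeg s \<alpha> div P) \<le> VV (\<Sum>i<s. m 0 i) d" by (rule VV_mono)
    then have "int (VV (\<Sum>i<s. m 0 i) (mdeg s \<alpha> div P)) \<le> int (VV (\<Sum>i<s. m 0 i) d)" by (simp only: of_nat_le_iff)
    then have "2 * k < int (VV (\<Sum>i<s. m 0 i) d)" using k unfolding P_def by linarith
    then show ?thesis by (intro S_vanish[OF r]) (simp only: VV_def)
  qed
  then show ?thesis by (simp add: cc_nth)
qed

lemma q_ge2: "real (card (UNIV :: 'a::{finite,field} set)) \<ge> 2"
proof -
  have "card {0::'a, 1} \<le> card (UNIV :: 'a set)" by (rule card_mono) auto
  then show ?thesis by simp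
qed

lemma absK_bound:
  fixes f :: "'a::{finite,field} fls"
  assumes "\<And>k. k < int N \<Longrightarrow> f $$ k = 0"
  shows "absK f \<le> inverse (2 ^ N)"
proof (cases "f = 0")
  case True then show ?thesis by (simp add: absK_def)
next
  case False
  define q where "q = real (card (UNIV :: 'a set))"
  have q: "q \<ge> 2" using q_ge2 by (simp add: q_def)
  have sub: "int N \<le> fls_subdegree f" by (rule fls_subdegree_geI[OF False assms]) 
  have "absK f = q powr (- real_of_int (fls_subdegree f))" using False by (simp add: absK_def q_def)
  also have "\<dots> \<le> q powr (- real N)" using q sub by (intro powr_mono) auto
  also have "\<dots> = inverse (q ^ N)" using q by (simp add: powr_minus powr_realpow)
  also have "\<dots> \<le> inverse (2 ^ N)" using q by (intro le_imp_inverse_le power_mono) auto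
  finally show ?thesis .
qed



lemma key_nat:
  fixes u C M E :: nat
  assumes "2 * C + 2 * C * (M + 1) + 2 * E + 1 \<le> u"
  shows "C * (u + M + 1) + E \<le> u * (u + 1) div 2"
proof -
  define U0 where "U0 = 2 * C + 2 * C * (M + 1) + 2 * E + 1"
  have u1: "1 \<le> u" using assms by simp
  have "u * U0 \<le> u * u" using assms unfolding U0_def by (intro mult_le_mono) auto
  moreover have "2 * C * (M + 1) + 2 * E + 1 \<le> u * (2 * C * (M + 1) + 2 * E + 1)"
    using u1 mult_le_mono1[OF u1, of "2 * C * (M + 1) + 2 * E + 1"] by simp
  ultimately have "2 * C * u + 2 * C * (M + 1) + 2 * E + 1 \<le> u * u"
    unfolding U0_def by (simp add: algebra_simps)
  then have "2 * (C * (u + M + 1) + E) \<le> u * (u + 1)" by (simp add: algebra_simps)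
  then show ?thesis by (subst less_eq_div_iff_mult_less_eq) (simp_all add: mult.commute)
qed

lemma asym:
  fixes R \<epsilon> :: real
  assumes R: "R > 0" and e: "\<epsilon> > 0" and P: "P \<ge> 1"
  shows "\<exists>L0. \<forall>L\<ge>L0. inverse (2 ^ (VV M (L div P) div 2)) * R ^ L < \<epsilon>"
proof -
  obtain J where J: "R < 2 ^ J" using real_arch_pow[of 2 R] by auto
  obtain E where E: "inverse \<epsilon> < 2 ^ E" using real_arch_pow[of 2 "inverse \<epsilon>"] by auto
  define C where "C = J * P"
  define U0 where "U0 = 2 * C + 2 * C * (M + 1) + 2 * E + 1"
  define L0 where "L0 = P * (M + U0)"
  show ?thesis
  proof (intro exI allI impI)
    fix L assume L: "L \<ge> L0"
    define \<delta> where "\<delta> = L div P"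
    have "L0 div P \<le> \<delta>" unfolding \<delta>_def by (rule div_le_mono[OF L])
    moreover have "L0 div P = M + U0" using P unfolding L0_def by simp
    ultimately have d: "M + U0 \<le> \<delta>" by simp
    define u where "u = \<delta> - M"
    have u: "U0 \<le> u" using d by (simp add: u_def)
    have "L = \<delta> * P + L mod P" by (simp add: \<delta>_def)
    moreover have "L mod P < P" using P by simp
    ultimately have "L \<le> P * (\<delta> + 1)" by (simp add: algebra_simps)
    then have "J * L \<le> J * (P * (\<delta> + 1))" by simp
    also have "\<dots> = C * (u + M + 1)" using d by (simp add: C_def u_def algebra_simps)
    finally have JL: "J * L \<le> C * (u + M + 1)" .
    have "C * (u + M + 1) + E \<le> u * (u + 1) div 2" by (rule key_nat) (use u in \<open>simp add: U0_def\<close>)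
    moreover have "VV M (L div P) = u * (u + 1)" by (simp add: VV_def u_def \<delta>_def)
    ultimately have w: "J * L + E \<le> VV M (L div P) div 2" using JL by simp
    have "inverse (2 ^ (VV M (L div P) div 2)) \<le> inverse ((2::real) ^ (J * L + E))"
      by (intro le_imp_inverse_le power_increasing w) auto
    moreover have "R ^ L \<le> (2 ^ J) ^ L" using R J by (intro power_mono) auto
    ultimately have "inverse (2 ^ (VV M (L div P) div 2)) * R ^ L \<le> inverse ((2::real) ^ (J * L + E)) * (2 ^ J) ^ L"
      using R by (intro mult_mono) auto
    also have "\<dots> = inverse (2 ^ E)" by (simp add: power_add power_mult)
    also have "\<dots> < \<epsilon>" using E e by (metis inverse_less_imp_less inverse_inverse_eq zero_less_numeral zero_less_power)
    finally show "inverse (2 ^ (VV M (L div P) div 2)) * R ^ L < \<epsilon>" .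
  qed
qed

lemma finite_Idx_mdeg: "finite {\<alpha>\<in>Idx s. mdeg s \<alpha> < L}"
proof -
  have "{\<alpha>\<in>Idx s. mdeg s \<alpha> < L} \<subseteq> (\<lambda>\<beta> i. if i < s then \<beta> i else 0) ` ({..<s} \<rightarrow>\<^sub>E {..<L})"
  proof
    fix \<alpha> assume a: "\<alpha> \<in> {\<alpha>\<in>Idx s. mdeg s \<alpha> < L}"
    have "\<alpha> i < L" if "i < s" for i
    proof -
      have "\<alpha> i \<le> mdeg s \<alpha>" unfolding mdeg_def using that by (intro member_le_sum) auto
      then show ?thesis using a by simp
    qed
    then have "restrict \<alpha> {..<s} \<in> {..<s} \<rightarrow>\<^sub>E {..<L}" by auto
    moreover have "\<alpha> = (\<lambda>i. if i < s then restrict \<alpha> {..<s} i else 0)"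
      using a by (auto simp: Idx_def)
    ultimately show "\<alpha> \<in> (\<lambda>\<beta> i. if i < s then \<beta> i else 0) ` ({..<s} \<rightarrow>\<^sub>E {..<L})" by blast
  qed
  moreover have "finite ((\<lambda>\<beta> i. if i < s then \<beta> i else 0) ` ({..<s} \<rightarrow>\<^sub>E {..<L}))"
    by (intro finite_imageI finite_PiE) auto
  ultimately show ?thesis by (rule finite_subset)
qed



theorem proposition1:
  fixes s r :: nat
    and n :: "nat \<Rightarrow> nat"
    and m :: "nat \<Rightarrow> nat \<Rightarrow> nat"
    and field_witness :: "'a::{finite,field} itself"
  assumes "s \<ge> 1" and "r \<ge> 1"
    and "\<forall>j<r. n j \<ge> 1"
  shows "\<exists>c :: (nat \<Rightarrow> nat) \<Rightarrow> 'a fls.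
      (\<forall>\<epsilon>>0. \<exists>D0. \<forall>D\<ge>D0. \<forall>\<alpha>\<in>Idx s.
          absK ((\<Sum>d<D. S_coeff s r m n d \<alpha>) - c \<alpha>) < \<epsilon>)
    \<and> (\<forall>\<epsilon>>0. finite {\<alpha>\<in>Idx s. absK (c \<alpha>) \<ge> \<epsilon>})
    \<and> (\<forall>R>0. \<forall>\<epsilon>>0. finite {\<alpha>\<in>Idx s. absK (c \<alpha>) * R ^ mdeg s \<alpha> \<ge> \<epsilon>})"
proof -
  have r: "r \<ge> 1" by (rule assms(2))
  define c :: "(nat \<Rightarrow> nat) \<Rightarrow> 'a fls" where "c = cc s r m n"
  define M0 where "M0 = (\<Sum>i<s. m 0 i)"
  define P where "P = (\<Sum>i<s. \<Sum>j<r. m j i) + 1"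
  have part1: "\<forall>\<epsilon>>0. \<exists>D0. \<forall>D\<ge>D0. \<forall>\<alpha>\<in>Idx s. absK ((\<Sum>d<D. S_coeff s r m n d \<alpha>) - c \<alpha>) < \<epsilon>"
  proof (intro allI impI)
    fix \<epsilon> :: real assume e: "\<epsilon> > 0"
    obtain N where N: "inverse \<epsilon> < 2 ^ N" using real_arch_pow[of 2 "inverse \<epsilon>"] by auto
    have N': "inverse ((2::real) ^ N) < \<epsilon>"
      using N e by (metis inverse_less_imp_less inverse_inverse_eq zero_less_numeral zero_less_power)
    show "\<exists>D0. \<forall>D\<ge>D0. \<forall>\<alpha>\<in>Idx s. absK ((\<Sum>d<D. S_coeff s r m n d \<alpha>) - c \<alpha>) < \<epsilon>"
    proof (intro exI allI impI ballI)
      fix D \<alpha> assume D: "N + M0 + 1 \<le> D"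
      have "absK ((\<Sum>d<D. S_coeff s r m n d \<alpha>) - c \<alpha>) \<le> inverse (2 ^ N)"
        by (rule absK_bound) (use conv[OF r] D in \<open>simp add: c_def M0_def\<close>)
      then show "absK ((\<Sum>d<D. S_coeff s r m n d \<alpha>) - c \<alpha>) < \<epsilon>" using N' by linarith
    qed
  qed
  have part3: "\<forall>R>0. \<forall>\<epsilon>>0. finite {\<alpha>\<in>Idx s. absK (c \<alpha>) * R ^ mdeg s \<alpha> \<ge> \<epsilon>}"
  proof (intro allI impI)
    fix R \<epsilon> :: real assume R: "R > 0" and e: "\<epsilon> > 0"
    obtain L0 where L0: "\<And>L. L \<ge> L0 \<Longrightarrow> inverse (2 ^ (VV M0 (L div P) div 2)) * R ^ L < \<epsilon>"
      using asym[OF R e, of P M0] by (auto simp: P_def)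
    have "{\<alpha>\<in>Idx s. absK (c \<alpha>) * R ^ mdeg s \<alpha> \<ge> \<epsilon>} \<subseteq> {\<alpha>\<in>Idx s. mdeg s \<alpha> < L0}"
    proof (rule subsetI, rule ccontr)
      fix \<alpha> assume a: "\<alpha> \<in> {\<alpha>\<in>Idx s. absK (c \<alpha>) * R ^ mdeg s \<alpha> \<ge> \<epsilon>}"
        and na: "\<alpha> \<notin> {\<alpha>\<in>Idx s. mdeg s \<alpha> < L0}"
      then have L: "mdeg s \<alpha> \<ge> L0" by auto
      have "absK (c \<alpha>) \<le> inverse (2 ^ (VV M0 (mdeg s \<alpha> div P) div 2))"
      proof (rule absK_bound)
        fix k assume k: "k < int (VV M0 (mdeg s \<alpha> div P) div 2)"
        have "2 * k < int (VV M0 (mdeg s \<alpha> div P))" using k by linarith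
        then show "c \<alpha> $$ k = 0" unfolding c_def by (intro cc_low[OF r]) (simp add: M0_def P_def)
      qed
      then have "absK (c \<alpha>) * R ^ mdeg s \<alpha> \<le> inverse (2 ^ (VV M0 (mdeg s \<alpha> div P) div 2)) * R ^ mdeg s \<alpha>"
        using R by (intro mult_right_mono) auto
      also have "\<dots> < \<epsilon>" by (rule L0[OF L])
      finally show False using a by simp
    qed
    then show "finite {\<alpha>\<in>Idx s. absK (c \<alpha>) * R ^ mdeg s \<alpha> \<ge> \<epsilon>}"
      by (rule finite_subset) (rule finite_Idx_mdeg)
  qed
  have part2: "\<forall>\<epsilon>>0. finite {\<alpha>\<in>Idx s. absK (c \<alpha>) \<ge> \<epsilon>}"
  proof (intro allI impI)
    fix \<epsilon> :: real assume e: "\<epsilon> > 0"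
    have "finite {\<alpha>\<in>Idx s. absK (c \<alpha>) * 1 ^ mdeg s \<alpha> \<ge> \<epsilon>}" using part3 e zero_less_one by blast
    then show "finite {\<alpha>\<in>Idx s. absK (c \<alpha>) \<ge> \<epsilon>}" by simp
  qed
  show ?thesis by (rule exI[of _ c]) (intro conjI part1 part2 part3)
qed



end
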